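(* Suppose Assumptions 1 and 2 hold and problem (P) is feasible (equivalently $\sum_i(\underline{x}_i-\phi_i(\underline{x}_i))\le\sum_i d_i\le\sum_i(\bar{x}_i-\phi_i(\bar{x}_i))$). Consider the gradient ascent dynamics $$\dot{\lambda}=\frac{dg^m(\lambda)}{d\lambda}=\sum_{i=1}^N\Big(d_i-\hat{x}_i(\lambda)+\phi_i\big(\hat{x}_i(\lambda)\big)\Big),\qquad \lambda(0)\in\mathbb{R}.$$ Then $\lim_{t\to\infty}\lambda(t)=\lambda^*$, where $\lambda^*$ is a maximizer of $g^m$ over $\mathbb{R}$, and $(\hat{x}_1(\lambda^* ),\dots,\hat{x}_N(\lambda^* ))$ is an optimal solution of problem (P).
   Context: For $i=1,\dots,N$: $d_i\in\mathbb{R}$, $\mathcal{X}_i=[\underline{x}_i,\bar{x}_i]$ a nonempty closed interval, $f_i,\phi_i:\mathbb{R}\to\mathbb{R}$. Problem (P): minimize $\sum_{i=1}^N f_i(x_i)$ subject to $\sum_{i=1}^N d_i=\sum_{i=1}^N(x_i-\phi_i(x_i))$ and $x_i\in\mathcal{X}_i$ for all $i$. Assumption 1: for each $i$, $f_i$ and $\phi_i$ are continuously differentiable, $f_i$ is strictly convex on $\mathcal{X}_i$, $\phi_i$ is convex on $\mathcal{X}_i$, and $\phi_i'(x_i)<1$ for all $x_i\in\mathcal{X}_i$. Assumption 2: $f_i'(x_i)>0$ for all $x_i\in\mathcal{X}_i$ and all $i$. Local Lagrangian: $\mathcal{L}^r_i(x_i,\lambda)=f_i(x_i)+\lambda(d_i-x_i+\phi_i(x_i))$.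 Let $v_i(x_i)=f_i'(x_i)(1-\phi_i'(x_i))^{-1}$ on $\mathcal{X}_i$ (strictly increasing). Define for $\lambda\in\mathbb{R}$: $\hat{x}_i(\lambda)=\underline{x}_i$ if $\lambda\le v_i(\underline{x}_i)$; $\hat{x}_i(\lambda)=v_i^{-1}(\lambda)$ if $v_i(\underline{x}_i)<\lambda<v_i(\bar{x}_i)$; $\hat{x}_i(\lambda)=\bar{x}_i$ if $\lambda\ge v_i(\bar{x}_i)$. Modified dual function: $g^m(\lambda)=\sum_{i=1}^N\mathcal{L}^r_i(\hat{x}_i(\lambda),\lambda)$; its derivative is $\sum_i(d_i-\hat{x}_i(\lambda)+\phi_i(\hat{x}_i(\lambda)))$. *)

theory Defs
  imports "HOL-Analysis.Analysis"
begin

definition strictly_convex_on :: "real set \<Rightarrow> (real \<Rightarrow> real) \<Rightarrow> bool" where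
  "strictly_convex_on S f \<longleftrightarrow>
     (\<forall>x\<in>S. \<forall>y\<in>S. x \<noteq> y \<longrightarrow>
        (\<forall>u::real. 0 < u \<and> u < 1 \<longrightarrow> f (u * x + (1 - u) * y) < u * f x + (1 - u) * f y))"

definition vfun :: "(real \<Rightarrow> real) \<Rightarrow> (real \<Rightarrow> real) \<Rightarrow> real \<Rightarrow> real" where
  "vfun df dphi x = df x / (1 - dphi x)"

definition xhat :: "real \<Rightarrow> real \<Rightarrow> (real \<Rightarrow> real) \<Rightarrow> real \<Rightarrow> real" where
  "xhat lo hi v lam =
     (if lam \<le> v lo then lo
      else if v hi \<le> lam then hi
      else (THE x. lo \<le> x \<and> x \<le> hi \<and> v x = lam))"

definition lagr :: "(real \<Rightarrow> real) \<Rightarrow> (real \<Rightarrow> real) \<Rightarrow> real \<Rightarrow> real \<Rightarrow> real \<Rightarrow> real" where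
  "lagr f phi d x lam = f x + lam * (d - x + phi x)"

definition gm :: "nat \<Rightarrow> (nat \<Rightarrow> real \<Rightarrow> real) \<Rightarrow> (nat \<Rightarrow> real \<Rightarrow> real) \<Rightarrow> (nat \<Rightarrow> real \<Rightarrow> real)
                  \<Rightarrow> (nat \<Rightarrow> real \<Rightarrow> real) \<Rightarrow> (nat \<Rightarrow> real) \<Rightarrow> (nat \<Rightarrow> real) \<Rightarrow> (nat \<Rightarrow> real)
                  \<Rightarrow> real \<Rightarrow> real" where
  "gm N f phi df dphi d lo hi lam =
     (\<Sum>i=1..N. lagr (f i) (phi i) (d i)
                  (xhat (lo i) (hi i) (vfun (df i) (dphi i)) lam) lam)"

definition feasible :: "nat \<Rightarrow> (nat \<Rightarrow> real \<Rightarrow> real) \<Rightarrow> (nat \<Rightarrow> real) \<Rightarrow> (nat \<Rightarrow> real) \<Rightarrow> (nat \<Rightarrow> real)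
                        \<Rightarrow> (nat \<Rightarrow> real) \<Rightarrow> bool" where
  "feasible N phi d lo hi x \<longleftrightarrow>
     (\<forall>i\<in>{1..N}. lo i \<le> x i \<and> x i \<le> hi i) \<and>
     (\<Sum>i=1..N. d i) = (\<Sum>i=1..N. x i - phi i (x i))"

definition optimal :: "nat \<Rightarrow> (nat \<Rightarrow> real \<Rightarrow> real) \<Rightarrow> (nat \<Rightarrow> real \<Rightarrow> real) \<Rightarrow> (nat \<Rightarrow> real)
                       \<Rightarrow> (nat \<Rightarrow> real) \<Rightarrow> (nat \<Rightarrow> real) \<Rightarrow> (nat \<Rightarrow> real) \<Rightarrow> bool" where
  "optimal N f phi d lo hi x \<longleftrightarrow>
     feasible N phi d lo hi x \<and>
     (\<forall>y. feasible N phi d lo hi y \<longrightarrow> (\<Sum>i=1..N. f i (x i)) \<le> (\<Sum>i=1..N. f i (y i)))"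

end

theory Submission
  imports Defs
begin


lemma deriv_at_pos:
  assumes "(lam has_real_derivative D) (at t within {0..})" "t > (0::real)"
  shows "(lam has_real_derivative D) (at t)"
proof -
  have "t \<in> interior {0::real..}" using assms(2) by simp
  then show ?thesis using assms(1) at_within_interior by metis
qed

lemma ode_core:
  fixes h lam :: "real \<Rightarrow> real"
  assumes hc: "continuous_on UNIV h"
    and hm: "\<And>x y. x \<le> y \<Longrightarrow> h y \<le> h x"
    and hz: "\<exists>z. h z = 0"
    and ode: "\<forall>t\<ge>0. (lam has_real_derivative h (lam t)) (at t within {0..})"
    and h0: "h (lam 0) \<le> 0"
  shows "\<exists>L. (lam \<longlongrightarrow> L) at_top \<and> h L = 0"
proof -
  define c where "c = lam 0"
  have dpos: "\<And>t. t > 0 \<Longrightarrow> (lam has_real_derivative h (lam t)) (at t)"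
    using ode deriv_at_pos by simp
  have lcont: "continuous_on {a..b} lam" if "0 \<le> a" for a b
  proof -
    have "continuous_on {0..} lam"
      using ode by (intro DERIV_continuous_on[where D="\<lambda>t. h (lam t)"]) auto
    then show ?thesis by (rule continuous_on_subset) (use that in auto)
  qed
  have lyap: "(lam b - z)^2 \<le> (lam a - z)^2" if "h z = 0" "0 \<le> a" "a \<le> b" for z a b
  proof (rule DERIV_nonpos_imp_decreasing_open[OF \<open>a \<le> b\<close>])
    fix x assume x: "a < x" "x < b"
    have "((\<lambda>t. (lam t - z)^2) has_real_derivative 2 * (lam x - z) * h (lam x)) (at x)"
      using dpos[of x] x that by (auto intro!: derivative_eq_intros)
    moreover have "2 * (lam x - z) * h (lam x) \<le> 0"
    proof (cases "lam x \<le> z")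
      case True
      then have "h (lam x) \<ge> 0" using hm[of "lam x" z] that by simp
      then show ?thesis using True by (simp add: mult_nonpos_nonneg)
    next
      case False
      then have "h (lam x) \<le> 0" using hm[of z "lam x"] that by simp
      then show ?thesis using False by (simp add: mult_nonneg_nonpos)
    qed
    ultimately show "\<exists>y. ((\<lambda>t. (lam t - z)^2) has_real_derivative y) (at x) \<and> y \<le> 0" by blast
  next
    show "continuous_on {a..b} (\<lambda>t. (lam t - z)^2)"
      using lcont[OF \<open>0 \<le> a\<close>] by (intro continuous_intros)
  qed
  define S where "S = {z. h z = 0 \<and> z \<le> c}"
  have Sne: "S \<noteq> {}"
  proof -
    obtain z0 where z0: "h z0 = 0" using hz by blast
    show ?thesis
    proof (cases "z0 \<le> c")
      case True then show ?thesis using z0 S_def by blast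
    next
      case False
      then have "h c \<ge> 0" using hm[of c z0] z0 by simp
      then have "h c = 0" using h0 c_def by simp
      then show ?thesis using S_def by blast
    qed
  qed
  have Sbdd: "bdd_above S" unfolding S_def by (auto intro: bdd_aboveI[where M=c])
  have Sclosed: "closed S"
  proof -
    have "S = h -` {0} \<inter> {..c}" unfolding S_def by auto
    moreover have "closed (h -` {0})"
      using hc by (simp add: continuous_on_closed_vimage)
    ultimately show ?thesis by auto
  qed
  define s where "s = Sup S"
  have sS: "s \<in> S" unfolding s_def using closed_contains_Sup[OF Sne Sbdd Sclosed] .
  then have hs: "h s = 0" and sc: "s \<le> c" unfolding S_def by auto
  have hneg: "h \<mu> < 0" if "s < \<mu>" "\<mu> \<le> c" for \<mu>
  proof -
    have "h \<mu> \<le> 0" using hm[of s \<mu>] hs that by simp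
    moreover have "h \<mu> \<noteq> 0"
    proof
      assume "h \<mu> = 0"
      then have "\<mu> \<in> S" using that S_def by auto
      then have "\<mu> \<le> s" unfolding s_def using Sbdd by (rule cSup_upper)
      then show False using that by simp
    qed
    ultimately show ?thesis by simp
  qed
  have lge: "lam t \<ge> s" if "t \<ge> 0" for t
  proof (rule ccontr)
    assume "\<not> lam t \<ge> s"
    then have lt: "lam t < s" by simp
    obtain t0 where t0: "0 \<le> t0" "t0 \<le> t" "lam t0 = s"
      using IVT2'[of lam t s 0] lcont[of 0 t] \<open>t \<ge> 0\<close> lt sc c_def by auto
    have "(lam t - s)^2 \<le> (lam t0 - s)^2" using lyap[OF hs t0(1) t0(2)] .
    then have "lam t = s" using t0(3) by simp
    then show False using lt by simp
  qed
  have lle: "lam t \<le> c" if "t \<ge> 0" for t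
  proof -
    have "(lam t - s)^2 \<le> (lam 0 - s)^2" using lyap[OF hs _ that] by simp
    then have "\<bar>lam t - s\<bar> \<le> \<bar>c - s\<bar>" unfolding c_def
      by (simp add: abs_le_square_iff)
    then show ?thesis using lge[OF that] sc by simp
  qed
  have hle: "h (lam t) \<le> 0" if "t \<ge> 0" for t
    using hm[of s "lam t"] hs lge[OF that] by simp
  have anti: "lam b \<le> lam a" if "0 \<le> a" "a \<le> b" for a b
  proof (rule DERIV_nonpos_imp_decreasing_open[OF \<open>a \<le> b\<close>])
    fix x assume x: "a < x" "x < b"
    then show "\<exists>y. (lam has_real_derivative y) (at x) \<and> y \<le> 0"
      using dpos[of x] hle[of x] that by auto
  qed (rule lcont[OF that(1)])
  define L where "L = Inf (lam ` {0..})"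
  have Lbdd: "bdd_below (lam ` {0..})" using lge by (auto intro: bdd_belowI[where m=s])
  have Lle: "L \<le> lam t" if "t \<ge> 0" for t
    unfolding L_def using that Lbdd by (auto intro: cInf_lower)
  have sL: "s \<le> L" unfolding L_def using lge by (auto intro: cInf_greatest)
  have lim: "(lam \<longlongrightarrow> L) at_top"
  proof (rule order_tendstoI)
    fix a assume "a < L"
    then show "eventually (\<lambda>t. a < lam t) at_top"
      using Lle by (auto intro: eventually_at_top_linorderI[where c=0] less_le_trans)
  next
    fix a assume "L < a"
    then obtain t0 where t0: "t0 \<ge> 0" "lam t0 < a"
      unfolding L_def using cInf_less_iff[OF _ Lbdd] by auto
    show "eventually (\<lambda>t. lam t < a) at_top"
      by (rule eventually_at_top_linorderI[where c=t0]) (use anti t0 in fastforce)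
  qed
  have hL: "h L = 0"
  proof (rule ccontr)
    assume "h L \<noteq> 0"
    then have "s < L" using sL hs by (cases "s = L") auto
    have Lc: "L \<le> c" using Lle[of 0] c_def by simp
    have hLn: "h L < 0" using hneg[OF \<open>s < L\<close> Lc] .
    have bound: "lam t - h L * t \<le> c" if "t \<ge> 0" for t
    proof -
      have "lam t - h L * t \<le> lam 0 - h L * 0"
      proof (rule DERIV_nonpos_imp_decreasing_open[OF that])
        fix x assume x: "0 < x" "x < t"
        have "((\<lambda>t. lam t - h L * t) has_real_derivative h (lam x) - h L) (at x)"
          using dpos[of x] x by (auto intro!: derivative_eq_intros)
        moreover have "h (lam x) \<le> h L" using hm[OF Lle[of x]] x by simp
        ultimately show "\<exists>y. ((\<lambda>t. lam t - h L * t) has_real_derivative y) (at x) \<and> y \<le> 0"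
          by force
      next
        show "continuous_on {0..t} (\<lambda>t. lam t - h L * t)"
          using lcont[of 0 t] by (intro continuous_intros) auto
      qed
      then show ?thesis by (simp add: c_def)
    qed
    define T where "T = (c - s + 1) / (- h L)"
    have T0: "T \<ge> 0" unfolding T_def using sc hLn by (intro divide_nonneg_pos) auto
    have "h L * T = - (c - s + 1)" unfolding T_def using hLn by simp
    then have "lam T \<le> s - 1" using bound[OF T0] by simp
    then show False using lge[OF T0] by simp
  qed
  show ?thesis using lim hL by blast
qed

lemma ode_conv:
  fixes h lam :: "real \<Rightarrow> real"
  assumes hc: "continuous_on UNIV h"
    and hm: "\<And>x y. x \<le> y \<Longrightarrow> h y \<le> h x"
    and hz: "\<exists>z. h z = 0"
    and ode: "\<forall>t\<ge>0. (lam has_real_derivative h (lam t)) (at t within {0..})"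
  shows "\<exists>L. (lam \<longlongrightarrow> L) at_top \<and> h L = 0"
proof (cases "h (lam 0) \<le> 0")
  case True then show ?thesis using ode_core[OF assms] by blast
next
  case False
  define h2 where "h2 = (\<lambda>x. - h (- x))"
  define lam2 where "lam2 = (\<lambda>t. - lam t)"
  have "continuous_on UNIV h2" unfolding h2_def
    by (intro continuous_intros continuous_on_compose2[OF hc]) auto
  moreover have "\<And>x y. x \<le> y \<Longrightarrow> h2 y \<le> h2 x" unfolding h2_def using hm by simp
  moreover have "\<exists>z. h2 z = 0" using hz unfolding h2_def by (metis minus_minus neg_equal_0_iff_equal)
  moreover have "\<forall>t\<ge>0. (lam2 has_real_derivative h2 (lam2 t)) (at t within {0..})"
    unfolding h2_def lam2_def using ode by (auto intro!: derivative_eq_intros)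
  moreover have "h2 (lam2 0) \<le> 0" unfolding h2_def lam2_def using False by simp
  ultimately obtain L where L: "(lam2 \<longlongrightarrow> L) at_top" "h2 L = 0" using ode_core by blast
  have "((\<lambda>t. - lam2 t) \<longlongrightarrow> - L) at_top" using L(1) by (intro tendsto_intros)
  then have "(lam \<longlongrightarrow> - L) at_top" unfolding lam2_def by simp
  moreover have "h (- L) = 0" using L(2) unfolding h2_def by simp
  ultimately show ?thesis by blast
qed



lemma mono_ext:
  fixes g :: "real \<Rightarrow> real"
  assumes gc: "\<And>x. isCont g x"
    and gm: "\<And>x y. lo < x \<Longrightarrow> x < y \<Longrightarrow> y < hi \<Longrightarrow> g x \<le> g y"
    and ab: "lo \<le> a" "a \<le> b" "b \<le> hi"
  shows "g a \<le> g b"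
proof (cases "a = b")
  case True then show ?thesis by simp
next
  case False
  then have "a < b" using ab by simp
  have l1: "((\<lambda>s. g (a + s)) \<longlongrightarrow> g a) (at_right 0)"
  proof -
    have "((\<lambda>s. a + s) \<longlongrightarrow> a) (at_right (0::real))"
      by (auto intro!: tendsto_eq_intros)
    then show ?thesis using isCont_tendsto_compose[OF gc] by blast
  qed
  have l2: "((\<lambda>s. g (b - s)) \<longlongrightarrow> g b) (at_right 0)"
  proof -
    have "((\<lambda>s. b - s) \<longlongrightarrow> b) (at_right (0::real))"
      by (auto intro!: tendsto_eq_intros)
    then show ?thesis using isCont_tendsto_compose[OF gc] by blast
  qed
  have ev: "eventually (\<lambda>s. g (a + s) \<le> g (b - s)) (at_right 0)"
  proof -
    have "(0::real) < (b - a) / 2" using \<open>a < b\<close> by simp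
    from eventually_at_right_real[OF this] show ?thesis
    proof (rule eventually_mono)
      fix s assume "s \<in> {0<..<(b - a) / 2}"
      then show "g (a + s) \<le> g (b - s)" using ab by (intro gm) auto
    qed
  qed
  show ?thesis by (rule tendsto_le[OF _ l2 l1 ev]) simp
qed

locale comp =
  fixes f phi df dphi :: "real \<Rightarrow> real" and lo hi :: real
  assumes le: "lo \<le> hi"
    and fd: "\<And>x. (f has_real_derivative df x) (at x)"
    and pd: "\<And>x. (phi has_real_derivative dphi x) (at x)"
    and dfc: "continuous_on UNIV df"
    and dpc: "continuous_on UNIV dphi"
    and sc: "strictly_convex_on {lo..hi} f"
    and pc: "convex_on {lo..hi} phi"
    and dlt: "\<And>x. x \<in> {lo..hi} \<Longrightarrow> dphi x < 1"
    and dfp: "\<And>x. x \<in> {lo..hi} \<Longrightarrow> df x > 0"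
begin

abbreviation "v \<equiv> vfun df dphi"
abbreviation "xh \<equiv> xhat lo hi v"

lemma fconv: "convex_on {lo..hi} f"
proof (rule convex_onI)
  fix t x y :: real assume t: "0 < t" "t < 1" and xy: "x \<in> {lo..hi}" "y \<in> {lo..hi}"
  show "f ((1 - t) *\<^sub>R x + t *\<^sub>R y) \<le> (1 - t) * f x + t * f y"
  proof (cases "x = y")
    case True then show ?thesis by (simp add: algebra_simps)
  next
    case False
    have H: "\<forall>u. 0 < u \<and> u < 1 \<longrightarrow> f (u * x + (1 - u) * y) < u * f x + (1 - u) * f y"
      using sc xy False unfolding strictly_convex_on_def by blast
    have "f ((1 - t) * x + (1 - (1 - t)) * y) < (1 - t) * f x + (1 - (1 - t)) * f y"
      using H[rule_format, of "1 - t"] t by simp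
    then show ?thesis by simp
  qed
qed (simp add: convex_real_interval)

lemma conn: "connected {lo..hi}" by (simp add: convex_connected convex_real_interval)

lemma df_int: assumes "lo < a" "a < b" "b < hi" shows "df a < df b"
proof -
  have mem: "a \<in> {lo..hi}" "b \<in> {lo..hi}" "(a + b) / 2 \<in> {lo..hi}" using assms by auto
  have H: "\<forall>u. 0 < u \<and> u < 1 \<longrightarrow> f (u * a + (1 - u) * b) < u * f a + (1 - u) * f b"
    using sc mem assms unfolding strictly_convex_on_def by auto
  have "f ((1/2) * a + (1 - 1/2) * b) < (1/2) * f a + (1 - 1/2) * f b"
    using H[rule_format, of "1/2"] by simp
  moreover have eq: "(1/2) * a + (1 - 1/2) * b = (a + b) / 2" by simp
  ultimately have s0: "f ((a + b) / 2) < (1/2) * f a + (1 - 1/2) * f b" by (simp only: eq)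
  then have s: "f ((a + b) / 2) < (f a + f b) / 2" by simp
  have ta: "f ((a + b) / 2) - f a \<ge> df a * ((a + b) / 2 - a)"
    by (rule convex_on_imp_above_tangent[OF fconv conn])
       (use assms mem in \<open>auto intro: has_field_derivative_at_within[OF fd]\<close>)
  have tb: "f ((a + b) / 2) - f b \<ge> df b * ((a + b) / 2 - b)"
    by (rule convex_on_imp_above_tangent[OF fconv conn])
       (use assms mem in \<open>auto intro: has_field_derivative_at_within[OF fd]\<close>)
  have e1: "(a + b) / 2 - a = (b - a) / 2" and e2: "(a + b) / 2 - b = - ((b - a) / 2)" by (simp_all add: field_simps)
  have "df a * ((b - a) / 2) < (f b - f a) / 2" using ta s unfolding e1 by (simp add: field_simps)
  moreover have "(f b - f a) / 2 < df b * ((b - a) / 2)" using tb s unfolding e2 by (simp add: field_simps)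
  ultimately have "df a * ((b - a) / 2) < df b * ((b - a) / 2)" by linarith
  moreover have "(b - a) / 2 > 0" using assms by simp
  ultimately show ?thesis by simp
qed

lemma dphi_int: assumes "lo < a" "a < b" "b < hi" shows "dphi a \<le> dphi b"
proof -
  have mem: "a \<in> {lo..hi}" "b \<in> {lo..hi}" using assms by auto
  have ta: "phi b - phi a \<ge> dphi a * (b - a)"
    by (rule convex_on_imp_above_tangent[OF pc conn])
       (use assms mem in \<open>auto intro: has_field_derivative_at_within[OF pd]\<close>)
  have tb: "phi a - phi b \<ge> dphi b * (a - b)"
    by (rule convex_on_imp_above_tangent[OF pc conn])
       (use assms mem in \<open>auto intro: has_field_derivative_at_within[OF pd]\<close>)
  have "dphi a * (b - a) \<le> dphi b * (b - a)" using ta tb by (simp add: algebra_simps)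
  then show ?thesis using assms by (simp add: mult_le_cancel_right)
qed

lemma dfcont: "isCont df x" using dfc by (simp add: continuous_on_eq_continuous_at)
lemma dpcont: "isCont dphi x" using dpc by (simp add: continuous_on_eq_continuous_at)

lemma df_mono: "lo \<le> a \<Longrightarrow> a \<le> b \<Longrightarrow> b \<le> hi \<Longrightarrow> df a \<le> df b"
  by (rule mono_ext[OF dfcont]) (use df_int less_imp_le in blast)+

lemma dphi_mono: "lo \<le> a \<Longrightarrow> a \<le> b \<Longrightarrow> b \<le> hi \<Longrightarrow> dphi a \<le> dphi b"
  by (rule mono_ext[OF dpcont]) (use dphi_int in blast)+

lemma df_strict: assumes "lo \<le> a" "a < b" "b \<le> hi" shows "df a < df b"
proof -
  define z1 where "z1 = (2 * a + b) / 3"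
  define z2 where "z2 = (a + 2 * b) / 3"
  have z: "a < z1" "z1 < z2" "z2 < b" using assms(2) unfolding z1_def z2_def by (simp_all add: field_simps)
  have "df a \<le> df z1" using assms z by (intro df_mono) linarith+
  also have "df z1 < df z2" using assms z by (intro df_int) linarith+
  also have "df z2 \<le> df b" using assms z by (intro df_mono) linarith+
  finally show ?thesis .
qed

lemma v_strict: assumes "lo \<le> a" "a < b" "b \<le> hi" shows "v a < v b"
proof -
  have p1: "0 < 1 - dphi a" "0 < 1 - dphi b" using dlt assms by auto
  have "dphi a \<le> dphi b" using assms by (intro dphi_mono) auto
  then have "1 - dphi b \<le> 1 - dphi a" by simp
  have pa: "0 < df a" using dfp assms by auto
  have "df a / (1 - dphi a) \<le> df a / (1 - dphi b)"
    using p1 pa \<open>1 - dphi b \<le> 1 - dphi a\<close> by (intro divide_left_mono) auto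
  also have "\<dots> < df b / (1 - dphi b)"
    using df_strict[OF assms] p1 by (intro divide_strict_right_mono) auto
  finally show ?thesis by (simp add: vfun_def)
qed

lemma v_mono: "lo \<le> a \<Longrightarrow> a \<le> b \<Longrightarrow> b \<le> hi \<Longrightarrow> v a \<le> v b"
  using v_strict by (cases "a = b") (auto intro: less_imp_le)

lemma v_cont: "continuous_on {lo..hi} v"
proof -
  have "continuous_on {lo..hi} (\<lambda>x. df x / (1 - dphi x))"
  proof (rule continuous_on_divide)
    show "continuous_on {lo..hi} df" using dfc continuous_on_subset by blast
    show "continuous_on {lo..hi} (\<lambda>x. 1 - dphi x)"
      using continuous_on_subset[OF dpc] by (intro continuous_on_diff continuous_on_const) auto
    show "\<forall>x\<in>{lo..hi}. 1 - dphi x \<noteq> 0" using dlt by force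
  qed
  then show ?thesis unfolding vfun_def .
qed

end

context comp begin

lemma xh_mid:
  assumes "v lo < \<mu>" "\<mu> < v hi"
  shows "lo \<le> xh \<mu> \<and> xh \<mu> \<le> hi \<and> v (xh \<mu>) = \<mu>"
proof -
  have "\<exists>x. lo \<le> x \<and> x \<le> hi \<and> v x = \<mu>"
    by (rule IVT'[OF _ _ le v_cont]) (use assms in auto)
  then obtain x where x: "lo \<le> x" "x \<le> hi" "v x = \<mu>" by blast
  have uq: "y = x" if "lo \<le> y" "y \<le> hi" "v y = \<mu>" for y
  proof (rule ccontr)
    assume ne: "y \<noteq> x"
    show False
    proof (cases "y < x")
      case True then have "v y < v x" using that x by (intro v_strict) auto
      then show False using that x by simp
    next
      case False then have "x < y" using ne by simp
      then have "v x < v y" using that x by (intro v_strict) auto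
      then show False using that x by simp
    qed
  qed
  have t: "(THE x. lo \<le> x \<and> x \<le> hi \<and> v x = \<mu>) = x"
    by (rule the_equality) (use x uq in blast)+
  have "xh \<mu> = (THE x. lo \<le> x \<and> x \<le> hi \<and> v x = \<mu>)"
    using assms by (simp add: xhat_def)
  then have "xh \<mu> = x" using t by simp
  then show ?thesis using x by simp
qed

lemma xh_key:
  shows "lo \<le> xh \<mu>" "xh \<mu> \<le> hi"
    "\<And>y. lo \<le> y \<Longrightarrow> y \<le> hi \<Longrightarrow> xh \<mu> < y \<Longrightarrow> \<mu> \<le> v y"
    "\<And>y. lo \<le> y \<Longrightarrow> y \<le> hi \<Longrightarrow> y < xh \<mu> \<Longrightarrow> v y \<le> \<mu>"
proof -
  have "lo \<le> xh \<mu> \<and> xh \<mu> \<le> hi \<and>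
     (\<forall>y. lo \<le> y \<longrightarrow> y \<le> hi \<longrightarrow> xh \<mu> < y \<longrightarrow> \<mu> \<le> v y) \<and>
     (\<forall>y. lo \<le> y \<longrightarrow> y \<le> hi \<longrightarrow> y < xh \<mu> \<longrightarrow> v y \<le> \<mu>)"
  proof (cases "\<mu> \<le> v lo")
    case True
    then have e: "xh \<mu> = lo" unfolding xhat_def by simp
    show ?thesis unfolding e using le True v_mono[of lo] by (auto intro: order_trans)
  next
    case F1: False
    show ?thesis
    proof (cases "v hi \<le> \<mu>")
      case True
      then have e: "xh \<mu> = hi" unfolding xhat_def using F1 by simp
      show ?thesis unfolding e using le True v_mono[of _ hi] by (auto intro: order_trans)
    next
      case False
      then have m: "lo \<le> xh \<mu>" "xh \<mu> \<le> hi" "v (xh \<mu>) = \<mu>" using xh_mid F1 by auto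
      have A: "\<mu> \<le> v y" if "lo \<le> y" "y \<le> hi" "xh \<mu> < y" for y
        using v_mono[of "xh \<mu>" y] m that by simp
      have B: "v y \<le> \<mu>" if "lo \<le> y" "y \<le> hi" "y < xh \<mu>" for y
        using v_mono[of y "xh \<mu>"] m that by simp
      show ?thesis using m A B by blast
    qed
  qed
  then show "lo \<le> xh \<mu>" "xh \<mu> \<le> hi"
    "\<And>y. lo \<le> y \<Longrightarrow> y \<le> hi \<Longrightarrow> xh \<mu> < y \<Longrightarrow> \<mu> \<le> v y"
    "\<And>y. lo \<le> y \<Longrightarrow> y \<le> hi \<Longrightarrow> y < xh \<mu> \<Longrightarrow> v y \<le> \<mu>" by auto
qed

lemma phi_cont: "isCont phi x" using pd DERIV_isCont by blast
lemma f_cont: "isCont f x" using fd DERIV_isCont by blast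

lemma xh_min:
  assumes x: "lo \<le> x" "x \<le> hi"
  shows "f (xh \<mu>) - \<mu> * (xh \<mu> - phi (xh \<mu>)) \<le> f x - \<mu> * (x - phi x)"
proof -
  define F where "F = (\<lambda>y. f y - \<mu> * (y - phi y))"
  have dF: "(F has_real_derivative (df y - \<mu> * (1 - dphi y))) (at y)" for y
    unfolding F_def using fd[of y] pd[of y] by (auto intro!: derivative_eq_intros)
  have cF: "continuous_on {a..b} F" for a b
    unfolding F_def using f_cont phi_cont
    by (intro continuous_at_imp_continuous_on ballI continuous_intros) auto
  have sgn1: "df y - \<mu> * (1 - dphi y) \<ge> 0" if "lo \<le> y" "y \<le> hi" "\<mu> \<le> v y" for y
  proof -
    have p: "0 < 1 - dphi y" using dlt that by auto
    have "\<mu> \<le> df y / (1 - dphi y)" using that by (simp add: vfun_def)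
    then have "\<mu> * (1 - dphi y) \<le> df y" using p by (simp add: pos_le_divide_eq)
    then show ?thesis by simp
  qed
  have sgn2: "df y - \<mu> * (1 - dphi y) \<le> 0" if "lo \<le> y" "y \<le> hi" "v y \<le> \<mu>" for y
  proof -
    have p: "0 < 1 - dphi y" using dlt that by auto
    have "df y / (1 - dphi y) \<le> \<mu>" using that by (simp add: vfun_def)
    then have "df y \<le> \<mu> * (1 - dphi y)" using p by (simp add: pos_divide_le_eq)
    then show ?thesis by simp
  qed
  have "F (xh \<mu>) \<le> F x"
  proof (cases "xh \<mu> \<le> x")
    case True
    show ?thesis
    proof (rule DERIV_nonneg_imp_increasing_open[OF True _ cF])
      fix y assume y: "xh \<mu> < y" "y < x"
      then have "lo \<le> y" "y \<le> hi" using xh_key(1)[of \<mu>] x by auto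
      then show "\<exists>d. (F has_real_derivative d) (at y) \<and> 0 \<le> d"
        using dF sgn1 xh_key(3) y by blast
    qed
  next
    case False
    then have Fx: "x \<le> xh \<mu>" by simp
    show ?thesis
    proof (rule DERIV_nonpos_imp_decreasing_open[OF Fx _ cF])
      fix y assume y: "x < y" "y < xh \<mu>"
      then have "lo \<le> y" "y \<le> hi" using xh_key(2)[of \<mu>] x by auto
      then show "\<exists>d. (F has_real_derivative d) (at y) \<and> d \<le> 0"
        using dF sgn2 xh_key(4) y by blast
    qed
  qed
  then show ?thesis unfolding F_def .
qed

lemma xh_mono:
  assumes "\<mu>1 \<le> \<mu>2" shows "xh \<mu>1 \<le> xh \<mu>2"
proof (rule ccontr)
  assume "\<not> xh \<mu>1 \<le> xh \<mu>2"
  then have lt: "xh \<mu>2 < xh \<mu>1" by simp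
  define y where "y = (xh \<mu>1 + xh \<mu>2) / 2"
  have y: "xh \<mu>2 < y" "y < xh \<mu>1" using lt unfolding y_def by (simp_all add: field_simps)
  have yb: "lo \<le> y" "y \<le> hi" using y xh_key(1)[of \<mu>2] xh_key(2)[of \<mu>1] by auto
  have "\<mu>2 \<le> v y" using xh_key(3)[OF yb y(1)] .
  moreover have "v y \<le> \<mu>1" using xh_key(4)[OF yb y(2)] .
  ultimately have "\<mu>1 = \<mu>2" using assms by simp
  then show False using lt by simp
qed

lemma psi_mono:
  assumes "lo \<le> a" "a \<le> b" "b \<le> hi" shows "a - phi a \<le> b - phi b"
proof (rule DERIV_nonneg_imp_increasing_open[OF assms(2)])
  fix y assume y: "a < y" "y < b"
  have "((\<lambda>x. x - phi x) has_real_derivative 1 - dphi y) (at y)"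
    using pd[of y] by (auto intro!: derivative_eq_intros)
  moreover have "1 - dphi y \<ge> 0" using dlt[of y] y assms by auto
  ultimately show "\<exists>d. ((\<lambda>x. x - phi x) has_real_derivative d) (at y) \<and> 0 \<le> d" by blast
next
  show "continuous_on {a..b} (\<lambda>x. x - phi x)" using phi_cont
    by (intro continuous_at_imp_continuous_on ballI continuous_intros) auto
qed

lemma xh_cont: "isCont xh \<mu>"
  unfolding isCont_def
proof (rule order_tendstoI)
  fix a assume a: "xh \<mu> < a"
  show "eventually (\<lambda>t. xh t < a) (at \<mu>)"
  proof (cases "hi < a")
    case True
    have "\<forall>t. xh t < a" using xh_key(2) True by (meson le_less_trans)
    then show ?thesis by (simp add: always_eventually)
  next
    case False
    define y where "y = (xh \<mu> + a) / 2"
    define z where "z = (xh \<mu> + y) / 2"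
    have o: "xh \<mu> < z" "z < y" "y < a" using a unfolding y_def z_def by (simp_all add: field_simps)
    have b: "lo \<le> z" "y \<le> hi" using o xh_key(1)[of \<mu>] False by auto
    have "\<mu> \<le> v z" using xh_key(3)[of z \<mu>] b o by auto
    also have "v z < v y" using b o by (intro v_strict) auto
    finally have "\<mu> < v y" .
    then have ev: "eventually (\<lambda>t. t < v y) (at \<mu>)"
      using order_tendstoD(2)[OF tendsto_ident_at] by blast
    show ?thesis
    proof (rule eventually_mono[OF ev])
      fix t assume t: "t < v y"
      show "xh t < a"
      proof (rule ccontr)
        assume "\<not> xh t < a"
        then have "y < xh t" using o by simp
        then have "v y \<le> t" using xh_key(4)[of y t] b o by auto
        then show False using t by simp
      qed
    qed
  qed
next
  fix a assume a: "a < xh \<mu>"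
  show "eventually (\<lambda>t. a < xh t) (at \<mu>)"
  proof (cases "a < lo")
    case True
    have "\<forall>t. a < xh t" using xh_key(1) True by (meson less_le_trans)
    then show ?thesis by (simp add: always_eventually)
  next
    case False
    define y where "y = (xh \<mu> + a) / 2"
    define z where "z = (xh \<mu> + y) / 2"
    have o: "a < y" "y < z" "z < xh \<mu>" using a unfolding y_def z_def by (simp_all add: field_simps)
    have b: "lo \<le> y" "z \<le> hi" using o xh_key(2)[of \<mu>] False by auto
    have "v y < v z" using b o by (intro v_strict) auto
    also have "v z \<le> \<mu>" using xh_key(4)[of z \<mu>] b o by auto
    finally have "v y < \<mu>" .
    then have ev: "eventually (\<lambda>t. v y < t) (at \<mu>)"
      using order_tendstoD(1)[OF tendsto_ident_at] by blast
    show ?thesis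
    proof (rule eventually_mono[OF ev])
      fix t assume t: "v y < t"
      show "a < xh t"
      proof (rule ccontr)
        assume "\<not> a < xh t"
        then have "xh t < y" using o by simp
        then have "t \<le> v y" using xh_key(3)[of y t] b o by auto
        then show False using t by simp
      qed
    qed
  qed
qed

end


lemma sum_lagr:
  "(\<Sum>i\<in>I. lagr (f i) (phi i) (d i) (x i) \<mu>)
     = (\<Sum>i\<in>I. f i (x i)) + \<mu> * ((\<Sum>i\<in>I. d i) - (\<Sum>i\<in>I. x i - phi i (x i)))"
proof -
  have "(\<Sum>i\<in>I. lagr (f i) (phi i) (d i) (x i) \<mu>)
      = (\<Sum>i\<in>I. f i (x i) + \<mu> * (d i - (x i - phi i (x i))))"
    unfolding lagr_def by (intro sum.cong) (auto simp: algebra_simps)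
  also have "\<dots> = (\<Sum>i\<in>I. f i (x i)) + \<mu> * (\<Sum>i\<in>I. d i - (x i - phi i (x i)))"
    by (simp add: sum.distrib sum_distrib_left)
  also have "(\<Sum>i\<in>I. d i - (x i - phi i (x i))) = (\<Sum>i\<in>I. d i) - (\<Sum>i\<in>I. x i - phi i (x i))"
    by (rule sum_subtractf)
  finally show ?thesis .
qed

theorem theorem1:
  fixes N :: nat
    and f phi df dphi :: "nat \<Rightarrow> real \<Rightarrow> real"
    and d lo hi :: "nat \<Rightarrow> real"
    and lam :: "real \<Rightarrow> real"
  assumes nonempty: "\<forall>i\<in>{1..N}. lo i \<le> hi i"
    and f_deriv: "\<forall>i\<in>{1..N}. \<forall>x. (f i has_real_derivative df i x) (at x)"
    and phi_deriv: "\<forall>i\<in>{1..N}. \<forall>x. (phi i has_real_derivative dphi i x) (at x)"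
    and df_cont: "\<forall>i\<in>{1..N}. continuous_on UNIV (df i)"
    and dphi_cont: "\<forall>i\<in>{1..N}. continuous_on UNIV (dphi i)"
    and f_strict_convex: "\<forall>i\<in>{1..N}. strictly_convex_on {lo i..hi i} (f i)"
    and phi_convex: "\<forall>i\<in>{1..N}. convex_on {lo i..hi i} (phi i)"
    and dphi_lt1: "\<forall>i\<in>{1..N}. \<forall>x\<in>{lo i..hi i}. dphi i x < 1"
    and df_pos: "\<forall>i\<in>{1..N}. \<forall>x\<in>{lo i..hi i}. df i x > 0"
    and feas: "\<exists>x. feasible N phi d lo hi x"
    and ode: "\<forall>t\<ge>0. (lam has_real_derivative
                 (\<Sum>i=1..N. d i - xhat (lo i) (hi i) (vfun (df i) (dphi i)) (lam t)
                     + phi i (xhat (lo i) (hi i) (vfun (df i) (dphi i)) (lam t))))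
               (at t within {0..})"
  shows "\<exists>lstar. (lam \<longlongrightarrow> lstar) at_top
           \<and> (\<forall>\<mu>. gm N f phi df dphi d lo hi \<mu> \<le> gm N f phi df dphi d lo hi lstar)
           \<and> optimal N f phi d lo hi (\<lambda>i. xhat (lo i) (hi i) (vfun (df i) (dphi i)) lstar)"
proof -
  have C: "comp (f i) (phi i) (df i) (dphi i) (lo i) (hi i)" if "i \<in> {1..N}" for i
    using that assms by unfold_locales auto
  define X where "X = (\<lambda>i \<mu>. xhat (lo i) (hi i) (vfun (df i) (dphi i)) \<mu>)"
  define h where "h = (\<lambda>\<mu>. \<Sum>i=1..N. d i - X i \<mu> + phi i (X i \<mu>))"
  have Xb: "lo i \<le> X i \<mu>" "X i \<mu> \<le> hi i" if "i \<in> {1..N}" for i \<mu>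
    using comp.xh_key(1,2)[OF C[OF that]] unfolding X_def by auto
  have hcont: "continuous_on UNIV h"
  proof (rule continuous_at_imp_continuous_on, rule ballI)
    fix \<mu> :: real
    show "isCont h \<mu>" unfolding h_def
    proof (rule continuous_sum)
      fix i assume i: "i \<in> {1..N}"
      have cX: "isCont (X i) \<mu>" using comp.xh_cont[OF C[OF i]] unfolding X_def .
      have cP: "isCont (\<lambda>\<mu>. phi i (X i \<mu>)) \<mu>"
        using isCont_o2[OF cX comp.phi_cont[OF C[OF i]]] .
      show "isCont (\<lambda>\<mu>. d i - X i \<mu> + phi i (X i \<mu>)) \<mu>"
        using cX cP by (intro continuous_intros) auto
    qed
  qed
  have hmono: "h y \<le> h x" if "x \<le> y" for x y
    unfolding h_def
  proof (rule sum_mono)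
    fix i assume i: "i \<in> {1..N}"
    have "X i x \<le> X i y" using comp.xh_mono[OF C[OF i] that] unfolding X_def .
    then have "X i x - phi i (X i x) \<le> X i y - phi i (X i y)"
      using Xb[OF i] by (intro comp.psi_mono[OF C[OF i]]) auto
    then show "d i - X i y + phi i (X i y) \<le> d i - X i x + phi i (X i x)" by simp
  qed
  obtain x0 where x0: "feasible N phi d lo hi x0" using feas by blast
  have x0b: "lo i \<le> x0 i" "x0 i \<le> hi i" if "i \<in> {1..N}" for i
    using x0 that unfolding feasible_def by auto
  have x0s: "(\<Sum>i=1..N. d i) = (\<Sum>i=1..N. x0 i - phi i (x0 i))"
    using x0 unfolding feasible_def by auto
  have hz: "\<exists>z. h z = 0"
  proof -
    define ml where "ml = - (\<Sum>i=1..N. \<bar>vfun (df i) (dphi i) (lo i)\<bar>) - 1"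
    define mh where "mh = (\<Sum>i=1..N. \<bar>vfun (df i) (dphi i) (hi i)\<bar>) + 1"
    have Xl: "X i ml = lo i" if i: "i \<in> {1..N}" for i
    proof (rule ccontr)
      assume "X i ml \<noteq> lo i"
      then have "lo i < X i ml" using Xb[OF i, of ml] Xb[OF i, of mh] by auto
      then have "vfun (df i) (dphi i) (lo i) \<le> ml"
        using comp.xh_key(4)[OF C[OF i], of "lo i" ml] nonempty i unfolding X_def by auto
      moreover have "\<bar>vfun (df i) (dphi i) (lo i)\<bar> \<le> (\<Sum>i=1..N. \<bar>vfun (df i) (dphi i) (lo i)\<bar>)"
        using i by (intro member_le_sum) auto
      ultimately show False unfolding ml_def by linarith
    qed
    have Xh: "X i mh = hi i" if i: "i \<in> {1..N}" for i
    proof (rule ccontr)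
      assume "X i mh \<noteq> hi i"
      then have "X i mh < hi i" using Xb[OF i, of ml] Xb[OF i, of mh] by auto
      then have "mh \<le> vfun (df i) (dphi i) (hi i)"
        using comp.xh_key(3)[OF C[OF i], of "hi i" mh] nonempty i unfolding X_def by auto
      moreover have "\<bar>vfun (df i) (dphi i) (hi i)\<bar> \<le> (\<Sum>i=1..N. \<bar>vfun (df i) (dphi i) (hi i)\<bar>)"
        using i by (intro member_le_sum) auto
      ultimately show False unfolding mh_def by linarith
    qed
    have "h ml = (\<Sum>i=1..N. d i - (lo i - phi i (lo i)))"
      unfolding h_def by (intro sum.cong) (auto simp: Xl)
    also have "\<dots> \<ge> (\<Sum>i=1..N. d i - (x0 i - phi i (x0 i)))"
    proof (rule sum_mono)
      fix i assume i: "i \<in> {1..N}"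
      have "lo i - phi i (lo i) \<le> x0 i - phi i (x0 i)"
        using x0b[OF i] nonempty i by (intro comp.psi_mono[OF C[OF i]]) auto
      then show "d i - (x0 i - phi i (x0 i)) \<le> d i - (lo i - phi i (lo i))" by simp
    qed
    finally have h1: "h ml \<ge> 0" using x0s by (simp add: sum_subtractf)
    have "h mh = (\<Sum>i=1..N. d i - (hi i - phi i (hi i)))"
      unfolding h_def by (intro sum.cong) (auto simp: Xh)
    also have "\<dots> \<le> (\<Sum>i=1..N. d i - (x0 i - phi i (x0 i)))"
    proof (rule sum_mono)
      fix i assume i: "i \<in> {1..N}"
      have "x0 i - phi i (x0 i) \<le> hi i - phi i (hi i)"
        using x0b[OF i] nonempty i by (intro comp.psi_mono[OF C[OF i]]) auto
      then show "d i - (hi i - phi i (hi i)) \<le> d i - (x0 i - phi i (x0 i))" by simp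
    qed
    finally have h2: "h mh \<le> 0" using x0s by (simp add: sum_subtractf)
    have a1: "0 \<le> (\<Sum>i=1..N. \<bar>vfun (df i) (dphi i) (lo i)\<bar>)" by (rule sum_nonneg) simp
    have a2: "0 \<le> (\<Sum>i=1..N. \<bar>vfun (df i) (dphi i) (hi i)\<bar>)" by (rule sum_nonneg) simp
    have "ml \<le> mh" unfolding ml_def mh_def using a1 a2 by linarith
    then show ?thesis
      using IVT2'[of h mh 0 ml] h1 h2 continuous_on_subset[OF hcont] by auto
  qed
  have ode': "\<forall>t\<ge>0. (lam has_real_derivative h (lam t)) (at t within {0..})"
    using ode unfolding h_def X_def by simp
  obtain L where L: "(lam \<longlongrightarrow> L) at_top" "h L = 0"
    using ode_conv[OF hcont _ hz ode'] hmono by blast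
  have hL: "(\<Sum>i=1..N. d i) - (\<Sum>i=1..N. X i L - phi i (X i L)) = 0"
  proof -
    have "(\<Sum>i=1..N. d i) - (\<Sum>i=1..N. X i L - phi i (X i L))
        = (\<Sum>i=1..N. d i - (X i L - phi i (X i L)))" by (simp add: sum_subtractf)
    also have "\<dots> = h L" unfolding h_def by (intro sum.cong) auto
    finally show ?thesis using L(2) by simp
  qed
  have lagr_min: "lagr (f i) (phi i) (d i) (X i \<mu>) \<mu> \<le> lagr (f i) (phi i) (d i) y \<mu>"
    if i: "i \<in> {1..N}" and y: "lo i \<le> y" "y \<le> hi i" for i \<mu> y
  proof -
    have "f i (X i \<mu>) - \<mu> * (X i \<mu> - phi i (X i \<mu>)) \<le> f i y - \<mu> * (y - phi i y)"
      using comp.xh_min[OF C[OF i] y] unfolding X_def .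
    then show ?thesis unfolding lagr_def by (simp add: algebra_simps)
  qed
  have gmL: "gm N f phi df dphi d lo hi L = (\<Sum>i=1..N. f i (X i L))"
  proof -
    have "gm N f phi df dphi d lo hi L = (\<Sum>i=1..N. lagr (f i) (phi i) (d i) (X i L) L)"
      unfolding gm_def X_def ..
    also have "\<dots> = (\<Sum>i=1..N. f i (X i L))" unfolding sum_lagr using hL by simp
    finally show ?thesis .
  qed
  have gmax: "gm N f phi df dphi d lo hi \<mu> \<le> gm N f phi df dphi d lo hi L" for \<mu>
  proof -
    have "gm N f phi df dphi d lo hi \<mu> = (\<Sum>i=1..N. lagr (f i) (phi i) (d i) (X i \<mu>) \<mu>)"
      unfolding gm_def X_def ..
    also have "\<dots> \<le> (\<Sum>i=1..N. lagr (f i) (phi i) (d i) (X i L) \<mu>)"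
      by (rule sum_mono) (use lagr_min Xb in auto)
    also have "\<dots> = (\<Sum>i=1..N. f i (X i L))" unfolding sum_lagr using hL by simp
    finally show ?thesis using gmL by simp
  qed
  have opt: "optimal N f phi d lo hi (\<lambda>i. X i L)"
    unfolding optimal_def
  proof (intro conjI allI impI)
    show "feasible N phi d lo hi (\<lambda>i. X i L)"
      unfolding feasible_def using Xb hL by auto
  next
    fix y assume y: "feasible N phi d lo hi y"
    have yb: "lo i \<le> y i" "y i \<le> hi i" if "i \<in> {1..N}" for i
      using y that unfolding feasible_def by auto
    have ys: "(\<Sum>i=1..N. d i) - (\<Sum>i=1..N. y i - phi i (y i)) = 0"
      using y unfolding feasible_def by auto
    have "(\<Sum>i=1..N. f i (X i L)) = (\<Sum>i=1..N. lagr (f i) (phi i) (d i) (X i L) L)"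
      unfolding sum_lagr using hL by simp
    also have "\<dots> \<le> (\<Sum>i=1..N. lagr (f i) (phi i) (d i) (y i) L)"
      by (rule sum_mono) (use lagr_min yb in auto)
    also have "\<dots> = (\<Sum>i=1..N. f i (y i))" unfolding sum_lagr using ys by simp
    finally show "(\<Sum>i=1..N. f i (X i L)) \<le> (\<Sum>i=1..N. f i (y i))" .
  qed
  show ?thesis using L(1) gmax opt unfolding X_def by blast
qed


end
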